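(* Let $K$ be an idempotent semifield. Then every finite division semialgebra $D$ over $K$ is archimedean, i.e. for every $x\in D$ there exists $y\in K$ with $x+y=y$.
   Context: A (possibly noncommutative) semiring has a commutative associative addition with identity $0$ and an associative multiplication with identity $1$, satisfying both distributive laws; a division semiring is one in which every nonzero element is invertible. A semifield is a commutative division semiring; it is idempotent if $x+x=x$ for all $x$. A division semialgebra over a semifield $K$ is a division semiring $D$ with an injective homomorphism from $K$ into the center of $D$ (identify $K$ with its image); it is finite if $D$ is finitely generated as a left $K$-semimodule. *)

theory Defs
  imports Main
begin

text \<open>Semirings in the sense of the paper: commutative monoid under addition,
monoid under multiplication, both distributive laws (no absorbing zero, no 0 \<noteq> 1).
This is exactly the sort {semiring, comm_monoid_add, monoid_mult}.\<close>

definition division_semiring :: "'a::{semiring,comm_monoid_add,monoid_mult} itself \<Rightarrow> bool" where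
  "division_semiring _ \<longleftrightarrow> (\<forall>x::'a. x \<noteq> 0 \<longrightarrow> (\<exists>y. x * y = 1 \<and> y * x = 1))"

definition semifield :: "'a::{semiring,comm_monoid_add,monoid_mult} itself \<Rightarrow> bool" where
  "semifield T \<longleftrightarrow> division_semiring T \<and> (\<forall>x y::'a. x * y = y * x)"

definition idempotent_add :: "'a::{semiring,comm_monoid_add,monoid_mult} itself \<Rightarrow> bool" where
  "idempotent_add _ \<longleftrightarrow> (\<forall>x::'a. x + x = x)"

definition semiring_hom ::
  "('k::{semiring,comm_monoid_add,monoid_mult} \<Rightarrow> 'd::{semiring,comm_monoid_add,monoid_mult}) \<Rightarrow> bool" where
  "semiring_hom f \<longleftrightarrow> (\<forall>a b. f (a + b) = f a + f b) \<and> (\<forall>a b. f (a * b) = f a * f b)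
      \<and> f 0 = 0 \<and> f 1 = 1"

definition division_semialgebra ::
  "('k::{semiring,comm_monoid_add,monoid_mult} \<Rightarrow> 'd::{semiring,comm_monoid_add,monoid_mult}) \<Rightarrow> bool" where
  "division_semialgebra f \<longleftrightarrow> division_semiring TYPE('d) \<and> semiring_hom f \<and> inj f
      \<and> (\<forall>k d. f k * d = d * f k)"

text \<open>Finite: D finitely generated as a left K-semimodule (action k\<cdot>x = f k * x).\<close>
definition finite_semialgebra ::
  "('k::{semiring,comm_monoid_add,monoid_mult} \<Rightarrow> 'd::{semiring,comm_monoid_add,monoid_mult}) \<Rightarrow> bool" where
  "finite_semialgebra f \<longleftrightarrow> (\<exists>S::'d set. finite S \<and>
      (\<forall>x. \<exists>c::'d \<Rightarrow> 'k. x = (\<Sum>s\<in>S. f (c s) * s)))"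

definition archimedean_over ::
  "('k::{semiring,comm_monoid_add,monoid_mult} \<Rightarrow> 'd::{semiring,comm_monoid_add,monoid_mult}) \<Rightarrow> bool" where
  "archimedean_over f \<longleftrightarrow> (\<forall>x::'d. \<exists>y::'k. x + f y = f y)"

end

theory Submission
  imports Defs
begin

lemma le_trans':
  fixes a b c :: "'d::{semiring,comm_monoid_add,monoid_mult}"
  assumes "a + b = b" "b + c = c" shows "a + c = c"
  by (metis assms add.assoc)

lemma le_multL:
  fixes a b c :: "'d::{semiring,comm_monoid_add,monoid_mult}"
  assumes "a + b = b" shows "c * a + c * b = c * b"
  by (metis assms distrib_left)

lemma le_multR:
  fixes a b c :: "'d::{semiring,comm_monoid_add,monoid_mult}"
  assumes "a + b = b" shows "a * c + b * c = b * c"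
  by (metis assms distrib_right)

lemma le_addlem:
  fixes a b c d :: "'d::{semiring,comm_monoid_add,monoid_mult}"
  assumes "a + b = b" "c + d = d" shows "(a + c) + (b + d) = b + d"
proof -
  have "(a + c) + (b + d) = (a + b) + (c + d)" by (simp add: add_ac)
  then show ?thesis using assms by simp
qed

lemma sum_le':
  fixes a b :: "'x \<Rightarrow> 'd::{semiring,comm_monoid_add,monoid_mult}"
  assumes "finite S" "\<forall>s\<in>S. a s + b s = b s"
  shows "sum a S + sum b S = sum b S"
  using assms
proof (induction S rule: finite_induct)
  case empty then show ?case by simp
next
  case (insert x F)
  then show ?case using le_addlem[of "a x" "b x" "sum a F" "sum b F"] by simp
qed

lemma mem_le_sum:
  fixes S :: "'d::{semiring,comm_monoid_add,monoid_mult} set"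
  assumes "finite S" "s \<in> S" "\<forall>x::'d. x + x = x"
  shows "s + sum id S = sum id S"
proof -
  have "sum id S = s + sum id (S - {s})" using assms sum.remove by fastforce
  then show ?thesis using assms(3) by (metis add.assoc)
qed

lemma sum_mult_le:
  fixes h :: "'x \<Rightarrow> 'd::{semiring,comm_monoid_add,monoid_mult}"
  assumes "finite S" "\<forall>x::'d. x + x = x"
  shows "(\<Sum>s\<in>S. h s * g) + (sum h S) * g = (sum h S) * g"
  using assms
proof (induction S rule: finite_induct)
  case empty then show ?case by simp
next
  case (insert x F)
  have "(\<Sum>s\<in>insert x F. h s * g) = h x * g + (\<Sum>s\<in>F. h s * g)" using insert by simp
  moreover have "(sum h (insert x F)) * g = h x * g + sum h F * g" using insert by (simp add: distrib_right)
  ultimately show ?case using le_addlem[OF _ insert.IH, of "h x * g" "h x * g"] assms(2) by simp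
qed

lemma hom_sum:
  assumes "semiring_hom f" "finite S"
  shows "(\<Sum>s\<in>S. f (c s)) = f (sum c S)"
  using assms(2)
proof (induction S rule: finite_induct)
  case empty then show ?case using assms(1) by (simp add: semiring_hom_def)
next
  case (insert x F)
  then show ?case using assms(1) by (simp add: semiring_hom_def)
qed

theorem mainTheorem19:
  fixes f :: "'k::{semiring,comm_monoid_add,monoid_mult} \<Rightarrow> 'd::{semiring,comm_monoid_add,monoid_mult}"
  assumes "semifield TYPE('k)"
    and "idempotent_add TYPE('k)"
    and "division_semialgebra f"
    and "finite_semialgebra f"
  shows "archimedean_over f"
proof -
  have hom: "semiring_hom f" and div: "division_semiring TYPE('d)"
    using assms(3) by (auto simp: division_semialgebra_def)
  have one: "(1::'d) + 1 = 1"
  proof -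
    have "(1::'d) + 1 = f 1 + f 1" using hom by (simp add: semiring_hom_def)
    also have "\<dots> = f (1 + 1)" using hom by (simp add: semiring_hom_def)
    also have "\<dots> = f 1" using assms(2) by (simp add: idempotent_add_def)
    finally show ?thesis using hom by (simp add: semiring_hom_def)
  qed
  have idem: "\<forall>x::'d. x + x = x"
  proof
    fix x :: 'd
    have "x + x = x * 1 + x * 1" by simp
    also have "\<dots> = x * (1 + 1)" by (simp add: distrib_left)
    finally show "x + x = x" using one by simp
  qed
  obtain S :: "'d set" where S: "finite S" "\<forall>x. \<exists>c::'d \<Rightarrow> 'k. x = (\<Sum>s\<in>S. f (c s) * s)"
    using assms(4) by (auto simp: finite_semialgebra_def)
  define g where "g = 1 + sum id S"
  have sg: "\<forall>s\<in>S. s + g = g"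
  proof
    fix s assume "s \<in> S"
    then have "s + sum id S = sum id S" using mem_le_sum[OF S(1) _ idem] by blast
    then show "s + g = g" unfolding g_def by (metis add.left_commute)
  qed
  have bound: "\<exists>k. x + f k * g = f k * g" for x
  proof -
    obtain c where c: "x = (\<Sum>s\<in>S. f (c s) * s)" using S(2) by blast
    have 1: "x + (\<Sum>s\<in>S. f (c s) * g) = (\<Sum>s\<in>S. f (c s) * g)"
      unfolding c by (rule sum_le'[OF S(1)]) (use sg le_multL in blast)
    have 2: "(\<Sum>s\<in>S. f (c s) * g) + f (sum c S) * g = f (sum c S) * g"
      using sum_mult_le[OF S(1) idem, of "\<lambda>s. f (c s)" g] hom_sum[OF hom S(1)] by simp
    show ?thesis using le_trans'[OF 1 2] by blast
  qed
  have gb: "\<exists>k'. g + f k' = f k'"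
  proof (cases "g = 0")
    case True then show ?thesis by simp
  next
    case False
    then obtain h where h: "g * h = 1" using div by (auto simp: division_semiring_def)
    obtain k where k: "g * g + f k * g = f k * g" using bound by blast
    have "(g * g) * h + (f k * g) * h = (f k * g) * h" using le_multR[OF k] by blast
    then have "g + f k = f k" using h by (simp add: mult.assoc)
    then show ?thesis by blast
  qed
  show ?thesis unfolding archimedean_over_def
  proof
    fix x :: 'd
    obtain k where k: "x + f k * g = f k * g" using bound by blast
    obtain k' where k': "g + f k' = f k'" using gb by blast
    have "f k * g + f k * f k' = f k * f k'" using le_multL[OF k'] by blast
    then have "x + f k * f k' = f k * f k'" using le_trans'[OF k] by blast
    then show "\<exists>y. x + f y = f y" using hom by (metis semiring_hom_def)
  qed
qed

end
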